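(* Let $M^\star\in\mathbb{R}^{m\times n}$, $k=\min(m,n)$, and let $M^\star=P\Sigma Q^\top$ be a singular value decomposition with $P\in\mathbb{R}^{m\times k}$, $Q\in\mathbb{R}^{n\times k}$ having orthonormal columns and $\Sigma=\mathrm{diag}(\sigma_1,\dots,\sigma_k)$, $\sigma_i\ge0$. Consider, for $W\in\mathbb{R}^{m\times n}$, $$\Phi(W)=\frac14\|W-2M^\star\|_F^2+\frac1{4k}\|W\|_\star^2.$$ Then $\Phi$ admits a unique global minimizer $W^\star$. Moreover, there exists a minimizer whose left and right singular subspaces coincide with those of $M^\star$, and such a minimizer can be written as $W^\star=P\,\mathrm{diag}(w_1,\dots,w_k)\,Q^\top$, where the $w_i\ge0$ are uniquely determined by $$w_i=\max(0,\,2\sigma_i-\lambda),\quad i=1,\dots,k,\qquad\text{with}\qquad \lambda=\frac1k\sum_{j=1}^kw_j.$$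
   Context: $\|\cdot\|_F$ is the Frobenius norm and $\|\cdot\|_\star$ the nuclear norm (sum of singular values). *)

theory Defs
  imports "Jordan_Normal_Form.Matrix"
begin

definition frob_norm :: "real mat \<Rightarrow> real" where
  "frob_norm A = sqrt (\<Sum>i<dim_row A. \<Sum>j<dim_col A. (A $$ (i, j))\<^sup>2)"

definition is_svd :: "real mat \<Rightarrow> real mat \<Rightarrow> (nat \<Rightarrow> real) \<Rightarrow> real mat \<Rightarrow> bool" where
  "is_svd A P s Q \<longleftrightarrow>
     (let m = dim_row A; n = dim_col A; k = min m n in
       P \<in> carrier_mat m k \<and> Q \<in> carrier_mat n k \<and>
       transpose_mat P * P = 1\<^sub>m k \<and> transpose_mat Q * Q = 1\<^sub>m k \<and>
       (\<forall>i<k. 0 \<le> s i) \<and>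
       A = P * mat_diag k s * transpose_mat Q)"

text \<open>Nuclear norm: sum of the singular values (taken from any SVD; this sum
  does not depend on the chosen SVD).\<close>
definition nuclear_norm :: "real mat \<Rightarrow> real" where
  "nuclear_norm A = (THE t. \<exists>P s Q. is_svd A P s Q \<and>
        t = (\<Sum>i<min (dim_row A) (dim_col A). s i))"

end

theory Submission
  imports Defs "Jordan_Normal_Form.Char_Poly" "Jordan_Normal_Form.Determinant"
begin


definition dotp :: "nat \<Rightarrow> (nat \<Rightarrow> real) \<Rightarrow> (nat \<Rightarrow> real) \<Rightarrow> real" where
  "dotp n x y = (\<Sum>i<n. x i * y i)"
definition mv :: "nat \<Rightarrow> (nat \<Rightarrow> nat \<Rightarrow> real) \<Rightarrow> (nat \<Rightarrow> real) \<Rightarrow> nat \<Rightarrow> real" where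
  "mv n W x = (\<lambda>i. \<Sum>j<n. W i j * x j)"
definition trf :: "(nat \<Rightarrow> nat \<Rightarrow> real) \<Rightarrow> nat \<Rightarrow> nat \<Rightarrow> real" where
  "trf W = (\<lambda>j i. W i j)"
definition orthon :: "nat \<Rightarrow> nat \<Rightarrow> (nat \<Rightarrow> nat \<Rightarrow> real) \<Rightarrow> bool" where
  "orthon n r v = (\<forall>a<r. \<forall>b<r. dotp n (v a) (v b) = (if a = b then 1 else 0))"

lemma entry3:
  assumes "P \<in> carrier_mat m k" "Q \<in> carrier_mat n k" "i < m" "j < n"
  shows "(P * mat_diag k s * transpose_mat Q) $$ (i,j) = (\<Sum>a<k. P $$ (i,a) * s a * Q $$ (j,a))"
proof -
  have "P * mat_diag k s = mat m k (\<lambda>(i,j). P $$ (i,j) * s j)"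
    using mat_diag_mult_right[OF assms(1)] .
  then show ?thesis using assms
    by (simp add: scalar_prod_def atLeast0LessThan row_def col_def)
qed

lemma orthon_complete:
  assumes "orthon n n v" "j < n" "l < n"
  shows "(\<Sum>a<n. v a j * v a l) = (if j = l then 1 else 0)"
proof -
  define V where "V = mat n n (\<lambda>(i,a). v a i)"
  have V: "V \<in> carrier_mat n n" unfolding V_def by simp
  have "transpose_mat V * V = 1\<^sub>m n"
    using assms(1) by (intro eq_matI) (auto simp: V_def orthon_def dotp_def scalar_prod_def atLeast0LessThan row_def col_def)
  then have "V * transpose_mat V = 1\<^sub>m n"
    using mat_mult_left_right_inverse[of "transpose_mat V" n V] V by simp
  then have "(V * transpose_mat V) $$ (j,l) = (if j = l then 1 else 0)" using assms by simp
  then show ?thesis using assms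
    by (simp add: V_def scalar_prod_def atLeast0LessThan row_def col_def)
qed



lemma dotp_comm: "dotp n x y = dotp n y x"
  by (simp add: dotp_def mult.commute)

lemma dotp_nonneg: "0 \<le> dotp n x x"
  by (simp add: dotp_def sum_nonneg)

lemma dotp_zero_iff: "dotp n x x = 0 \<longleftrightarrow> (\<forall>i<n. x i = 0)"
  unfolding dotp_def by (subst sum_nonneg_eq_0_iff) auto

lemma dotp_scale_left: "dotp n (\<lambda>i. c * x i) y = c * dotp n x y"
  by (simp add: dotp_def sum_distrib_left algebra_simps)
lemma dotp_scale_right: "dotp n x (\<lambda>i. c * y i) = c * dotp n x y"
  by (simp add: dotp_def sum_distrib_left algebra_simps)

lemma dotp_sum_right: "dotp n x (\<lambda>i. \<Sum>a\<in>A. f a i) = (\<Sum>a\<in>A. dotp n x (f a))"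
  unfolding dotp_def sum_distrib_left by (rule sum.swap)
lemma dotp_sum_left: "dotp n (\<lambda>i. \<Sum>a\<in>A. f a i) x = (\<Sum>a\<in>A. dotp n (f a) x)"
  unfolding dotp_def sum_distrib_right by (rule sum.swap)

lemma dotp_cong: "(\<And>i. i < n \<Longrightarrow> x i = x' i) \<Longrightarrow> (\<And>i. i < n \<Longrightarrow> y i = y' i) \<Longrightarrow> dotp n x y = dotp n x' y'"
  by (simp add: dotp_def)

lemma adjoint: "dotp m u (mv n W x) = dotp n (mv m (trf W) u) x"
  unfolding dotp_def mv_def trf_def
  by (simp add: sum_distrib_left sum_distrib_right mult_ac) (subst sum.swap, simp add: mult_ac)

lemma trf_trf[simp]: "trf (trf W) = W" by (simp add: trf_def)

lemma orthon_expand: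
  assumes "orthon n n v" "j < n"
  shows "z j = (\<Sum>c<n. v c j * dotp n (v c) z)"
proof -
  have "(\<Sum>c<n. v c j * dotp n (v c) z) = (\<Sum>i<n. z i * (\<Sum>c<n. v c j * v c i))"
    by (simp add: dotp_def sum_distrib_left sum_distrib_right mult_ac) (subst sum.swap, simp add: mult_ac)
  also have "\<dots> = (\<Sum>i<n. z i * (if j = i then 1 else 0))"
    using orthon_complete[OF assms(1) assms(2)] by simp
  also have "\<dots> = z j" using assms(2) by (simp add: if_distrib cong: if_cong)
  finally show ?thesis by simp
qed

lemma normalize_unit:
  assumes "0 < dotp n x x"
  shows "dotp n (\<lambda>i. (1 / sqrt (dotp n x x)) * x i) (\<lambda>i. (1 / sqrt (dotp n x x)) * x i) = 1"
proof -
  define s where "s = sqrt (dotp n x x)"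
  have ss: "s * s = dotp n x x" using assms unfolding s_def by simp
  have "dotp n (\<lambda>i. (1 / s) * x i) (\<lambda>i. (1 / s) * x i) = (1 / s) * ((1 / s) * dotp n x x)"
    unfolding dotp_scale_left dotp_scale_right ..
  also have "\<dots> = dotp n x x / (s * s)" by simp
  also have "\<dots> = 1" using ss assms by simp
  finally show ?thesis unfolding s_def .
qed

lemma orthon_mono: "orthon n r v \<Longrightarrow> r' \<le> r \<Longrightarrow> orthon n r' v"
  by (auto simp: orthon_def)

lemma orthon_extend:
  "orthon n (Suc r) (v(r := w)) \<longleftrightarrow> orthon n r v \<and> (\<forall>a<r. dotp n (v a) w = 0) \<and> dotp n w w = 1"
proof
  assume h: "orthon n (Suc r) (v(r := w))"
  have "orthon n r v" using h unfolding orthon_def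
    by (metis (no_types, lifting) fun_upd_other less_SucI less_irrefl_nat)
  moreover have "\<forall>a<r. dotp n (v a) w = 0"
  proof (intro allI impI)
    fix a assume a: "a < r"
    have "dotp n ((v(r := w)) a) ((v(r := w)) r) = 0" using h a unfolding orthon_def
      by (metis less_Suc_eq less_irrefl_nat)
    then show "dotp n (v a) w = 0" using a by simp
  qed
  moreover have "dotp n w w = 1" using h unfolding orthon_def
    by (metis fun_upd_same lessI)
  ultimately show "orthon n r v \<and> (\<forall>a<r. dotp n (v a) w = 0) \<and> dotp n w w = 1" by blast
next
  assume h: "orthon n r v \<and> (\<forall>a<r. dotp n (v a) w = 0) \<and> dotp n w w = 1"
  show "orthon n (Suc r) (v(r := w))" unfolding orthon_def
  proof (intro allI impI)
    fix a b assume a: "a < Suc r" and b: "b < Suc r"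
    show "dotp n ((v(r := w)) a) ((v(r := w)) b) = (if a = b then 1 else 0)"
    proof -
      have h1: "\<forall>a<r. dotp n w (v a) = 0" using h by (metis dotp_comm)
      show ?thesis
        using h h1 a b unfolding orthon_def less_Suc_eq
        by (cases "a = r"; cases "b = r") auto
    qed
  qed
qed

lemma orthon_one_more:
  assumes "orthon n r v" "r < n"
  shows "\<exists>w. (\<forall>a<r. dotp n (v a) w = 0) \<and> dotp n w w = 1"
proof -
  define c where "c j = (\<lambda>i. (if i = j then 1 else 0) - (\<Sum>a<r. v a j * v a i))" for j
  have "\<exists>j<n. \<exists>i<n. c j i \<noteq> 0"
  proof (rule ccontr)
    assume "\<not> ?thesis"
    then have z: "\<And>i j. j < n \<Longrightarrow> i < n \<Longrightarrow> c j i = 0" by auto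
    have "real n = (\<Sum>j<n. 1)" by simp
    also have "\<dots> = (\<Sum>j<n. \<Sum>a<r. v a j * v a j)"
    proof (rule sum.cong)
      fix x assume "x \<in> {..<n}"
      then have "c x x = 0" using z by simp
      then show "1 = (\<Sum>a<r. v a x * v a x)" by (simp add: c_def)
    qed simp
    also have "\<dots> = (\<Sum>a<r. dotp n (v a) (v a))"
      unfolding dotp_def by (rule sum.swap)
    also have "\<dots> = (\<Sum>a<r. 1)"
      using assms(1) by (intro sum.cong) (auto simp: orthon_def)
    also have "\<dots> = real r" by simp
    finally show False using assms(2) by simp
  qed
  then obtain j i where ji: "j < n" "i < n" "c j i \<noteq> 0" by auto
  have orth: "dotp n (v b) (c j) = 0" if "b < r" for b
  proof -
    have "dotp n (v b) (c j) = dotp n (v b) (\<lambda>i. (if i = j then 1 else 0)) - dotp n (v b) (\<lambda>i. \<Sum>a<r. v a j * v a i)"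
      by (simp add: c_def dotp_def sum_subtractf algebra_simps)
    also have "dotp n (v b) (\<lambda>i. (if i = j then 1 else 0)) = v b j"
      using ji by (simp add: dotp_def if_distrib cong: if_cong)
    also have "dotp n (v b) (\<lambda>i. \<Sum>a<r. v a j * v a i) = (\<Sum>a<r. v a j * dotp n (v b) (v a))"
      by (simp add: dotp_sum_right dotp_scale_right)
    also have "\<dots> = (\<Sum>a<r. v a j * (if b = a then 1 else 0))"
      using assms(1) that by (intro sum.cong) (auto simp: orthon_def)
    also have "\<dots> = v b j" using that by (simp add: if_distrib cong: if_cong)
    finally show ?thesis by simp
  qed
  have pos: "0 < dotp n (c j) (c j)"
  proof -
    have "dotp n (c j) (c j) \<noteq> 0" unfolding dotp_zero_iff using ji by blast
    then show ?thesis using dotp_nonneg[of n "c j"] by linarith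
  qed
  define w where "w = (\<lambda>i. (1 / sqrt (dotp n (c j) (c j))) * c j i)"
  have "dotp n w w = 1"
    using normalize_unit[OF pos] unfolding w_def .
  moreover have "\<forall>a<r. dotp n (v a) w = 0"
    using orth unfolding w_def dotp_scale_right by simp
  ultimately show ?thesis by blast
qed

lemma orthon_completion_aux:
  "orthon n (n - d) v \<Longrightarrow> d \<le> n \<Longrightarrow> \<exists>v'. orthon n n v' \<and> (\<forall>a<n - d. v' a = v a)"
proof (induction d arbitrary: v)
  case 0
  then show ?case by (intro exI[of _ v]) simp
next
  case (Suc d)
  define r where "r = n - Suc d"
  have rn: "r < n" using Suc.prems(2) by (simp add: r_def)
  have o0: "orthon n r v" using Suc.prems(1) by (simp add: r_def)
  obtain w where w: "\<forall>a<r. dotp n (v a) w = 0" "dotp n w w = 1"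
    using orthon_one_more[OF o0 rn] by blast
  have o: "orthon n (Suc r) (v(r := w))"
    unfolding orthon_extend using o0 w by (intro conjI)
  have sr: "Suc r = n - d" using Suc.prems(2) by (simp add: r_def)
  have o': "orthon n (n - d) (v(r := w))" using o sr by simp
  have dn: "d \<le> n" using Suc.prems(2) by simp
  obtain v' where v': "orthon n n v'" "\<forall>a<n - d. v' a = (v(r := w)) a"
    using Suc.IH[OF o' dn] by blast
  have "\<forall>a<r. v' a = v a"
  proof (intro allI impI)
    fix a assume "a < r"
    then show "v' a = v a" using v'(2)[rule_format, of a] sr by simp
  qed
  then show ?case using v'(1) unfolding r_def by blast
qed

lemma orthon_completion:
  assumes "orthon n r v" "r \<le> n"
  shows "\<exists>v'. orthon n n v' \<and> (\<forall>a<r. v' a = v a)"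
proof -
  have e: "n - (n - r) = r" using assms(2) by simp
  have "n - r \<le> n" by simp
  from orthon_completion_aux[of n "n - r" v, unfolded e, OF assms(1) this] show ?thesis .
qed



lemma eig_normalize:
  assumes pos: "0 < dotp d y y" and ev: "\<forall>a<d. (\<Sum>b<d. B a b * y b) = \<mu> * y a"
  shows "\<exists>y \<mu>. dotp d y y = 1 \<and> (\<forall>a<d. (\<Sum>b<d. B a b * y b) = \<mu> * y a)"
proof -
  define c where "c = 1 / sqrt (dotp d y y)"
  have "dotp d (\<lambda>i. c * y i) (\<lambda>i. c * y i) = 1" unfolding c_def by (rule normalize_unit[OF pos])
  moreover have "\<forall>a<d. (\<Sum>b<d. B a b * (c * y b)) = \<mu> * (c * y a)"
  proof (intro allI impI)
    fix a assume a: "a < d"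
    have "(\<Sum>b<d. B a b * (c * y b)) = c * (\<Sum>b<d. B a b * y b)"
      by (simp add: sum_distrib_left mult_ac)
    also have "\<dots> = \<mu> * (c * y a)" using ev a by simp
    finally show "(\<Sum>b<d. B a b * (c * y b)) = \<mu> * (c * y a)" .
  qed
  ultimately show ?thesis by blast
qed

lemma sym_eig:
  assumes d: "0 < d" and sym: "\<forall>a<d. \<forall>b<d. B a b = B b a"
  shows "\<exists>y \<mu>. dotp d y y = 1 \<and> (\<forall>a<d. (\<Sum>b<d. B a b * y b) = \<mu> * y a)"
proof -
  define Bc where "Bc = mat d d (\<lambda>(i,j). complex_of_real (B i j))"
  have Bc: "Bc \<in> carrier_mat d d" unfolding Bc_def by simp
  obtain as where as: "char_poly Bc = (\<Prod>a\<leftarrow>as. [:- a, 1:])" "length as = d"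
    using char_poly_factorized[OF Bc] by blast
  then have "as \<noteq> []" using d by auto
  then obtain z where z: "z \<in> set as" by (cases as) auto
  have "poly (char_poly Bc) z = 0"
    unfolding as(1) using z by (simp add: poly_prod_list prod_list_zero_iff)
  then have "eigenvalue Bc z" using eigenvalue_root_char_poly[OF Bc] by simp
  then obtain x where "eigenvector Bc x z" unfolding eigenvalue_def by blast
  then have x: "x \<in> carrier_vec d" "x \<noteq> 0\<^sub>v d" "Bc *\<^sub>v x = z \<cdot>\<^sub>v x"
    unfolding eigenvector_def using Bc by auto
  have eq: "(\<Sum>j<d. complex_of_real (B i j) * x $ j) = z * x $ i" if i: "i < d" for i
  proof -
    have "(Bc *\<^sub>v x) $ i = (z \<cdot>\<^sub>v x) $ i" using x(3) by simp
    then show ?thesis using i x(1) Bc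
      by (simp add: Bc_def scalar_prod_def atLeast0LessThan row_def)
  qed
  define p where "p i = Re (x $ i)" for i
  define q where "q i = Im (x $ i)" for i
  define \<alpha> where "\<alpha> = Re z"
  define \<beta> where "\<beta> = Im z"
  have eqp: "mv d B p i = \<alpha> * p i - \<beta> * q i" if i: "i < d" for i
  proof -
    have "Re (\<Sum>j<d. complex_of_real (B i j) * x $ j) = Re (z * x $ i)" using eq[OF i] by simp
    then show ?thesis by (simp add: Re_sum mv_def p_def q_def \<alpha>_def \<beta>_def)
  qed
  have eqq: "mv d B q i = \<alpha> * q i + \<beta> * p i" if i: "i < d" for i
  proof -
    have "Im (\<Sum>j<d. complex_of_real (B i j) * x $ j) = Im (z * x $ i)" using eq[OF i] by simp
    then show ?thesis by (simp add: Im_sum mv_def p_def q_def \<alpha>_def \<beta>_def algebra_simps)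
  qed
  have symm: "mv d (trf B) y i = mv d B y i" if "i < d" for y i
    unfolding mv_def trf_def using sym that by (intro sum.cong) auto
  have "dotp d p (mv d B q) = dotp d (mv d (trf B) p) q" by (rule adjoint)
  also have "\<dots> = dotp d (mv d B p) q" by (rule dotp_cong) (auto simp: symm)
  finally have "dotp d p (\<lambda>i. \<alpha> * q i + \<beta> * p i) = dotp d (\<lambda>i. \<alpha> * p i - \<beta> * q i) q"
    using dotp_cong[of d p p "mv d B q" "\<lambda>i. \<alpha> * q i + \<beta> * p i"]
          dotp_cong[of d "mv d B p" "\<lambda>i. \<alpha> * p i - \<beta> * q i" q q] eqp eqq by simp
  then have "\<alpha> * dotp d p q + \<beta> * dotp d p p = \<alpha> * dotp d p q - \<beta> * dotp d q q"
    by (simp add: dotp_def sum.distrib sum_subtractf sum_distrib_left algebra_simps)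
  then have b0: "\<beta> * (dotp d p p + dotp d q q) = 0" by (simp add: algebra_simps dotp_comm[of d q p])
  obtain i where i: "i < d" "x $ i \<noteq> 0"
  proof -
    have "\<exists>i<d. x $ i \<noteq> 0"
    proof (rule ccontr)
      assume "\<not> ?thesis"
      then have "x = 0\<^sub>v d" using x(1) by (intro eq_vecI) auto
      then show False using x(2) by simp
    qed
    then show ?thesis using that by blast
  qed
  then have "p i \<noteq> 0 \<or> q i \<noteq> 0" unfolding p_def q_def using complex_eqI by force
  then have "dotp d p p \<noteq> 0 \<or> dotp d q q \<noteq> 0" using i(1) dotp_zero_iff by blast
  then have pq: "0 < dotp d p p \<or> 0 < dotp d q q" using dotp_nonneg[of d p] dotp_nonneg[of d q] by linarith
  then have "0 < dotp d p p + dotp d q q" using dotp_nonneg[of d p] dotp_nonneg[of d q] by linarith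
  then have "\<beta> = 0" using b0 by simp
  then have evp: "\<forall>a<d. (\<Sum>b<d. B a b * p b) = \<alpha> * p a"
    and evq: "\<forall>a<d. (\<Sum>b<d. B a b * q b) = \<alpha> * q a"
    using eqp eqq by (auto simp: mv_def)
  show ?thesis using pq eig_normalize[OF _ evp] eig_normalize[OF _ evq] by blast
qed



lemma sum_split_add: "(\<Sum>c<r + (d::nat). f c) = (\<Sum>c<r. f c) + (\<Sum>a<d. f (r + a))"
  by (induction d) (auto simp: add.assoc)

lemma mv_lin: "mv n W (\<lambda>j. \<Sum>b\<in>A. f b * g b j) i = (\<Sum>b\<in>A. f b * mv n W (g b) i)"
  unfolding mv_def by (simp add: sum_distrib_left sum.swap[of _ A] mult_ac)

lemma mv_scale: "mv n W (\<lambda>j. c * y j) i = c * mv n W y i"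
  unfolding mv_def by (simp add: sum_distrib_left mult_ac)

lemma adjoint': "dotp n v (mv m (trf W) w) = dotp m (mv n W v) w"
  using adjoint[of n v m "trf W" w] by (simp add: dotp_comm)

lemma eig_perp:
  assumes rn: "r < n" and ov: "orthon n r v"
    and hyp: "\<And>a x. a < r \<Longrightarrow> (\<forall>b<r. dotp n (v b) x = 0) \<Longrightarrow> dotp m (mv n W (v a)) (mv n W x) = 0"
  shows "\<exists>x \<mu>. dotp n x x = 1 \<and> (\<forall>a<r. dotp n (v a) x = 0) \<and> (\<forall>j<n. mv m (trf W) (mv n W x) j = \<mu> * x j)"
proof -
  obtain v' where v': "orthon n n v'" and agree: "\<forall>a<r. v' a = v a"
    using orthon_completion[OF ov] rn by auto
  define d where "d = n - r"
  have d0: "0 < d" and nrd: "n = r + d" using rn by (auto simp: d_def)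
  define B where "B a b = dotp m (mv n W (v' (r + a))) (mv n W (v' (r + b)))" for a b
  have "\<forall>a<d. \<forall>b<d. B a b = B b a" unfolding B_def by (simp add: dotp_comm)
  then obtain y \<mu> where y: "dotp d y y = 1" and ev: "\<forall>a<d. (\<Sum>b<d. B a b * y b) = \<mu> * y a"
    using sym_eig[OF d0] by blast
  define x where "x = (\<lambda>j. \<Sum>b<d. y b * v' (r + b) j)"
  have vv: "dotp n (v' c) (v' c') = (if c = c' then 1 else 0)" if "c < n" "c' < n" for c c'
    using v' that unfolding orthon_def by blast
  have dx: "dotp n (v' c) x = (\<Sum>b<d. y b * (if c = r + b then 1 else 0))" if c: "c < n" for c
    unfolding x_def dotp_sum_right dotp_scale_right
  proof (intro sum.cong refl)
    fix b assume "b \<in> {..<d}"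
    then have "r + b < n" using nrd by simp
    then show "y b * dotp n (v' c) (v' (r + b)) = y b * (if c = r + b then 1 else 0)"
      using vv[OF c] by simp
  qed
  have dx1: "dotp n (v' c) x = 0" if "c < r" for c
    using dx[of c] that nrd by simp
  have dx2: "dotp n (v' (r + a)) x = y a" if "a < d" for a
  proof -
    have "dotp n (v' (r + a)) x = (\<Sum>b<d. y b * (if a = b then 1 else 0))"
      using dx[of "r + a"] that nrd by simp
    also have "\<dots> = y a" using that by (simp add: if_distrib cong: if_cong)
    finally show ?thesis .
  qed
  have xx: "dotp n x x = 1"
  proof -
    have "dotp n x x = (\<Sum>b<d. y b * dotp n (v' (r + b)) x)"
      by (subst (1) x_def) (simp add: dotp_sum_left dotp_scale_left)
    also have "\<dots> = (\<Sum>b<d. y b * y b)" by (intro sum.cong) (auto simp: dx2)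
    finally show ?thesis using y by (simp add: dotp_def)
  qed
  have perp: "\<forall>a<r. dotp n (v a) x = 0" using dx1 agree by auto
  have Wx: "mv n W x i = (\<Sum>b<d. y b * mv n W (v' (r + b)) i)" for i
    unfolding x_def by (rule mv_lin)
  have eigen: "mv m (trf W) (mv n W x) j = \<mu> * x j" if j: "j < n" for j
  proof -
    let ?z = "mv m (trf W) (mv n W x)"
    have "?z j = (\<Sum>c<n. v' c j * dotp n (v' c) ?z)" by (rule orthon_expand[OF v' j])
    also have "\<dots> = (\<Sum>c<n. v' c j * dotp m (mv n W (v' c)) (mv n W x))"
      by (simp add: adjoint')
    also have "\<dots> = (\<Sum>c<r. v' c j * dotp m (mv n W (v' c)) (mv n W x)) +
       (\<Sum>a<d. v' (r + a) j * dotp m (mv n W (v' (r + a))) (mv n W x))"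
      unfolding nrd by (rule sum_split_add)
    also have "(\<Sum>c<r. v' c j * dotp m (mv n W (v' c)) (mv n W x)) = 0"
      using hyp[OF _ perp] agree by (intro sum.neutral) auto
    also have "(\<Sum>a<d. v' (r + a) j * dotp m (mv n W (v' (r + a))) (mv n W x)) =
       (\<Sum>a<d. v' (r + a) j * (\<mu> * y a))"
    proof (intro sum.cong refl)
      fix a assume a: "a \<in> {..<d}"
      have "dotp m (mv n W (v' (r + a))) (mv n W x) =
          dotp m (mv n W (v' (r + a))) (\<lambda>i. \<Sum>b<d. y b * mv n W (v' (r + b)) i)"
        using Wx by (intro arg_cong[where f="dotp m _"] ext) simp
      also have "\<dots> = (\<Sum>b<d. B a b * y b)"
        unfolding dotp_sum_right dotp_scale_right B_def by (simp add: mult_ac)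
      also have "\<dots> = \<mu> * y a" using ev a by simp
      finally show "v' (r + a) j * dotp m (mv n W (v' (r + a))) (mv n W x) = v' (r + a) j * (\<mu> * y a)"
        by simp
    qed
    also have "0 + (\<Sum>a<d. v' (r + a) j * (\<mu> * y a)) = \<mu> * x j"
      unfolding x_def by (simp add: sum_distrib_left mult_ac)
    finally show ?thesis .
  qed
  show ?thesis using xx perp eigen by blast
qed



definition svd_st :: "nat \<Rightarrow> nat \<Rightarrow> (nat \<Rightarrow> nat \<Rightarrow> real) \<Rightarrow> nat \<Rightarrow> (nat \<Rightarrow> nat \<Rightarrow> real) \<Rightarrow> (nat \<Rightarrow> nat \<Rightarrow> real) \<Rightarrow> (nat \<Rightarrow> real) \<Rightarrow> bool" where
  "svd_st m n W r u v s \<longleftrightarrow> orthon m r u \<and> orthon n r v \<and>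
     (\<forall>a<r. 0 \<le> s a \<and> (\<forall>i<m. mv n W (v a) i = s a * u a i) \<and> (\<forall>j<n. mv m (trf W) (u a) j = s a * v a j))"

lemma svd_st_sym: "svd_st m n W r u v s \<longleftrightarrow> svd_st n m (trf W) r v u s"
  unfolding svd_st_def by auto

lemma dotp_mv_self:
  assumes "\<forall>j<n. mv m (trf W) (mv n W x) j = \<mu> * x j"
  shows "dotp m (mv n W x) (mv n W x) = \<mu> * dotp n x x"
proof -
  have "dotp m (mv n W x) (mv n W x) = dotp n (mv m (trf W) (mv n W x)) x"
    by (rule adjoint)
  also have "\<dots> = dotp n (\<lambda>j. \<mu> * x j) x" using assms by (intro dotp_cong) auto
  finally show ?thesis by (simp add: dotp_scale_left)
qed

lemma hyp_from_st:
  assumes st: "svd_st m n W r u v s" and a: "a < r" and perp: "\<forall>b<r. dotp n (v b) x = 0"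
  shows "dotp m (mv n W (v a)) (mv n W x) = 0"
proof -
  have "dotp m (mv n W (v a)) (mv n W x) = dotp m (\<lambda>i. s a * u a i) (mv n W x)"
    using st a unfolding svd_st_def by (intro dotp_cong) auto
  also have "\<dots> = s a * dotp n (mv m (trf W) (u a)) x" by (simp add: dotp_scale_left adjoint)
  also have "dotp n (mv m (trf W) (u a)) x = dotp n (\<lambda>j. s a * v a j) x"
    using st a unfolding svd_st_def by (intro dotp_cong) auto
  also have "\<dots> = 0" using perp a by (simp add: dotp_scale_left)
  finally show ?thesis by simp
qed

lemma ext_pos:
  assumes st: "svd_st m n W r u v s" and xx: "dotp n x x = 1" and perp: "\<forall>a<r. dotp n (v a) x = 0"
    and ev: "\<forall>j<n. mv m (trf W) (mv n W x) j = \<mu> * x j" and pos: "0 < \<mu>"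
  shows "\<exists>u' v' s'. svd_st m n W (Suc r) u' v' s'"
proof -
  define t where "t = sqrt \<mu>"
  have t: "0 < t" "t * t = \<mu>" using pos by (auto simp: t_def)
  define w where "w = (\<lambda>i. (1 / t) * mv n W x i)"
  have ww: "dotp m w w = 1"
    unfolding w_def dotp_scale_left dotp_scale_right dotp_mv_self[OF ev] xx
    using t pos by (simp add: field_simps)
  have uw: "\<forall>a<r. dotp m (u a) w = 0"
  proof (intro allI impI)
    fix a assume a: "a < r"
    have "dotp m (u a) (mv n W x) = dotp n (mv m (trf W) (u a)) x" by (rule adjoint)
    also have "\<dots> = dotp n (\<lambda>j. s a * v a j) x"
      using st a unfolding svd_st_def by (intro dotp_cong) auto
    also have "\<dots> = 0" using perp a by (simp add: dotp_scale_left)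
    finally show "dotp m (u a) w = 0" unfolding w_def dotp_scale_right by simp
  qed
  have ou: "orthon m (Suc r) (u(r := w))"
    unfolding orthon_extend using st uw ww unfolding svd_st_def by blast
  have ov: "orthon n (Suc r) (v(r := x))"
    unfolding orthon_extend using st perp xx unfolding svd_st_def by blast
  have "svd_st m n W (Suc r) (u(r := w)) (v(r := x)) (s(r := t))"
    unfolding svd_st_def
  proof (rule conjI[OF ou conjI[OF ov]], intro allI impI)
    fix a assume a: "a < Suc r"
    show "0 \<le> (s(r := t)) a \<and>
         (\<forall>i<m. mv n W ((v(r := x)) a) i = (s(r := t)) a * (u(r := w)) a i) \<and>
         (\<forall>j<n. mv m (trf W) ((u(r := w)) a) j = (s(r := t)) a * (v(r := x)) a j)"
    proof (cases "a = r")
      case True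
      have "\<forall>i<m. mv n W x i = t * w i" using t by (simp add: w_def)
      moreover have "\<forall>j<n. mv m (trf W) w j = t * x j"
      proof (intro allI impI)
        fix j assume j: "j < n"
        have "mv m (trf W) w j = (1 / t) * mv m (trf W) (mv n W x) j"
          unfolding w_def by (rule mv_scale)
        also have "\<dots> = (1 / t) * (t * t * x j)" using ev j t by simp
        also have "\<dots> = t * x j" using t(1) by (simp add: field_simps)
        finally show "mv m (trf W) w j = t * x j" .
      qed
      ultimately show ?thesis using True t by simp
    next
      case False
      then have "a < r" using a by simp
      then show ?thesis using st False unfolding svd_st_def by simp
    qed
  qed
  then show ?thesis by blast
qed

lemma ext_zero:
  assumes st: "svd_st m n W r u v s"
    and xx: "dotp n x x = 1" and perp: "\<forall>a<r. dotp n (v a) x = 0" and z: "\<forall>i<m. mv n W x i = 0"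
    and xx': "dotp m x' x' = 1" and perp': "\<forall>a<r. dotp m (u a) x' = 0" and z': "\<forall>j<n. mv m (trf W) x' j = 0"
  shows "\<exists>u' v' s'. svd_st m n W (Suc r) u' v' s'"
proof -
  have ou: "orthon m (Suc r) (u(r := x'))"
    unfolding orthon_extend using st perp' xx' unfolding svd_st_def by blast
  have ov: "orthon n (Suc r) (v(r := x))"
    unfolding orthon_extend using st perp xx unfolding svd_st_def by blast
  have "svd_st m n W (Suc r) (u(r := x')) (v(r := x)) (s(r := 0))"
    unfolding svd_st_def
  proof (rule conjI[OF ou conjI[OF ov]], intro allI impI)
    fix a assume a: "a < Suc r"
    show "0 \<le> (s(r := 0)) a \<and>
         (\<forall>i<m. mv n W ((v(r := x)) a) i = (s(r := 0)) a * (u(r := x')) a i) \<and>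
         (\<forall>j<n. mv m (trf W) ((u(r := x')) a) j = (s(r := 0)) a * (v(r := x)) a j)"
    proof (cases "a = r")
      case True
      then show ?thesis using z z' by simp
    next
      case False
      then have "a < r" using a by simp
      then show ?thesis using st False unfolding svd_st_def by simp
    qed
  qed
  then show ?thesis by blast
qed

lemma svd_step:
  assumes st: "svd_st m n W r u v s" and rm: "r < m" and rn: "r < n"
  shows "\<exists>u' v' s'. svd_st m n W (Suc r) u' v' s'"
proof -
  have ov: "orthon n r v" and ou: "orthon m r u" using st unfolding svd_st_def by auto
  obtain x \<mu> where x: "dotp n x x = 1" "\<forall>a<r. dotp n (v a) x = 0"
      "\<forall>j<n. mv m (trf W) (mv n W x) j = \<mu> * x j"
    using eig_perp[OF rn ov hyp_from_st[OF st]] by blast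
  have mu: "dotp m (mv n W x) (mv n W x) = \<mu>" using dotp_mv_self[OF x(3)] x(1) by simp
  show ?thesis
  proof (cases "0 < \<mu>")
    case True
    then show ?thesis using ext_pos[OF st x True] by blast
  next
    case False
    then have "dotp m (mv n W x) (mv n W x) = 0" using mu dotp_nonneg[of m "mv n W x"] by linarith
    then have zx: "\<forall>i<m. mv n W x i = 0" using dotp_zero_iff by blast
    have st': "svd_st n m (trf W) r v u s" using st svd_st_sym by blast
    obtain x' \<mu>' where x': "dotp m x' x' = 1" "\<forall>a<r. dotp m (u a) x' = 0"
        "\<forall>i<m. mv n (trf (trf W)) (mv m (trf W) x') i = \<mu>' * x' i"
      using eig_perp[OF rm ou hyp_from_st[OF st']] by blast
    have mu': "dotp n (mv m (trf W) x') (mv m (trf W) x') = \<mu>'" using dotp_mv_self[OF x'(3)] x'(1) by simp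
    show ?thesis
    proof (cases "0 < \<mu>'")
      case True
      obtain u' v' s' where "svd_st n m (trf W) (Suc r) u' v' s'"
        using ext_pos[OF st' x' True] by blast
      then have "svd_st m n W (Suc r) v' u' s'" using svd_st_sym[of m n W] by simp
      then show ?thesis by blast
    next
      case False
      then have "dotp n (mv m (trf W) x') (mv m (trf W) x') = 0" using mu' dotp_nonneg[of n "mv m (trf W) x'"] by linarith
      then have zx': "\<forall>j<n. mv m (trf W) x' j = 0" using dotp_zero_iff by blast
      show ?thesis using ext_zero[OF st x(1,2) zx x'(1,2) zx'] .
    qed
  qed
qed

lemma svd_partial: "r \<le> min m n \<Longrightarrow> \<exists>u v s. svd_st m n W r u v s"
proof (induction r)
  case 0
  show ?case by (auto simp: svd_st_def orthon_def)
next
  case (Suc r)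
  then obtain u v s where "svd_st m n W r u v s" by auto
  then show ?case using svd_step Suc.prems by auto
qed

lemma recon:
  assumes st: "svd_st m n W n u v s" and i: "i < m" and j: "j < n"
  shows "W i j = (\<Sum>a<n. u a i * s a * v a j)"
proof -
  have ov: "orthon n n v" using st unfolding svd_st_def by auto
  have "W i j = (\<Sum>c<n. v c j * dotp n (v c) (\<lambda>l. W i l))" by (rule orthon_expand[OF ov j])
  also have "\<dots> = (\<Sum>c<n. v c j * mv n W (v c) i)"
    by (simp add: dotp_def mv_def mult_ac)
  also have "\<dots> = (\<Sum>c<n. u c i * s c * v c j)"
    using st i unfolding svd_st_def by (intro sum.cong) auto
  finally show ?thesis .
qed

lemma svd_fun:
  fixes W :: "nat \<Rightarrow> nat \<Rightarrow> real"
  assumes "k = min m n"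
  shows "\<exists>u v s. orthon m k u \<and> orthon n k v \<and> (\<forall>a<k. 0 \<le> s a) \<and>
     (\<forall>i<m. \<forall>j<n. W i j = (\<Sum>a<k. u a i * s a * v a j))"
proof -
  obtain u v s where st: "svd_st m n W k u v s" using svd_partial[of k m n W] assms by auto
  have rec: "\<forall>i<m. \<forall>j<n. W i j = (\<Sum>a<k. u a i * s a * v a j)"
  proof (cases "n \<le> m")
    case True
    then have "k = n" using assms by simp
    then show ?thesis using recon[of m n W u v s] st by auto
  next
    case False
    then have km: "k = m" using assms by simp
    have st': "svd_st n m (trf W) m v u s" using st km svd_st_sym by simp
    show ?thesis
    proof (intro allI impI)
      fix i j assume "i < m" "j < n"
      then have "trf W j i = (\<Sum>a<m. v a j * s a * u a i)" using recon[OF st'] by blast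
      then show "W i j = (\<Sum>a<k. u a i * s a * v a j)" unfolding km by (simp add: trf_def mult_ac)
    qed
  qed
  show ?thesis using st rec unfolding svd_st_def by blast
qed



lemma swap4: "(\<Sum>i\<in>I. \<Sum>j\<in>J. \<Sum>a\<in>A. \<Sum>b\<in>B. f i j a b) = (\<Sum>a\<in>A. \<Sum>b\<in>B. \<Sum>i\<in>I. \<Sum>j\<in>J. f i j a b)"
proof -
  have "(\<Sum>i\<in>I. \<Sum>j\<in>J. \<Sum>a\<in>A. \<Sum>b\<in>B. f i j a b) = (\<Sum>i\<in>I. \<Sum>a\<in>A. \<Sum>j\<in>J. \<Sum>b\<in>B. f i j a b)"
    by (rule sum.cong[OF refl], rule sum.swap)
  also have "\<dots> = (\<Sum>i\<in>I. \<Sum>a\<in>A. \<Sum>b\<in>B. \<Sum>j\<in>J. f i j a b)"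
    by (rule sum.cong[OF refl], rule sum.cong[OF refl], rule sum.swap)
  also have "\<dots> = (\<Sum>a\<in>A. \<Sum>i\<in>I. \<Sum>b\<in>B. \<Sum>j\<in>J. f i j a b)"
    by (rule sum.swap)
  also have "\<dots> = (\<Sum>a\<in>A. \<Sum>b\<in>B. \<Sum>i\<in>I. \<Sum>j\<in>J. f i j a b)"
    by (rule sum.cong[OF refl], rule sum.swap)
  finally show ?thesis .
qed

lemma bil:
  "(\<Sum>i<m. \<Sum>j<n. (\<Sum>a<k1. \<alpha> a i * x a * \<beta> a j) * (\<Sum>b<k2. u b i * y b * v b j)) =
   (\<Sum>a<k1. \<Sum>b<k2. x a * y b * dotp m (\<alpha> a) (u b) * dotp n (\<beta> a) (v b))"
proof -
  have "(\<Sum>i<m. \<Sum>j<n. (\<Sum>a<k1. \<alpha> a i * x a * \<beta> a j) * (\<Sum>b<k2. u b i * y b * v b j)) =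
     (\<Sum>i<m. \<Sum>j<n. \<Sum>a<k1. \<Sum>b<k2. (\<alpha> a i * x a * \<beta> a j) * (u b i * y b * v b j))"
    by (simp add: sum_product)
  also have "\<dots> = (\<Sum>a<k1. \<Sum>b<k2. \<Sum>i<m. \<Sum>j<n. (\<alpha> a i * x a * \<beta> a j) * (u b i * y b * v b j))"
    by (rule swap4)
  also have "\<dots> = (\<Sum>a<k1. \<Sum>b<k2. x a * y b * dotp m (\<alpha> a) (u b) * dotp n (\<beta> a) (v b))"
  proof (intro sum.cong refl)
    fix a b
    have "x a * y b * dotp m (\<alpha> a) (u b) * dotp n (\<beta> a) (v b) =
       x a * y b * (\<Sum>i<m. \<Sum>j<n. (\<alpha> a i * u b i) * (\<beta> a j * v b j))"
      by (simp add: dotp_def sum_product)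
    also have "\<dots> = (\<Sum>i<m. \<Sum>j<n. (\<alpha> a i * x a * \<beta> a j) * (u b i * y b * v b j))"
      by (simp add: sum_distrib_left mult_ac)
    finally show "(\<Sum>i<m. \<Sum>j<n. (\<alpha> a i * x a * \<beta> a j) * (u b i * y b * v b j)) =
       x a * y b * dotp m (\<alpha> a) (u b) * dotp n (\<beta> a) (v b)" by simp
  qed
  finally show ?thesis .
qed

lemma bessel:
  assumes "orthon m k \<alpha>"
  shows "(\<Sum>a<k. (dotp m (\<alpha> a) z)\<^sup>2) \<le> dotp m z z"
proof -
  define c where "c a = dotp m (\<alpha> a) z" for a
  define p where "p i = (\<Sum>a<k. c a * \<alpha> a i)" for i
  have zp: "dotp m z p = (\<Sum>a<k. c a * c a)"
    unfolding p_def dotp_sum_right dotp_scale_right by (simp add: c_def dotp_comm)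
  have pp: "dotp m p p = (\<Sum>a<k. c a * c a)"
  proof -
    have "dotp m p p = dotp m (\<lambda>i. \<Sum>a<k. c a * \<alpha> a i) p"
      by (rule dotp_cong) (auto simp: p_def)
    also have "\<dots> = (\<Sum>a<k. c a * dotp m (\<alpha> a) p)"
      by (simp add: dotp_sum_left dotp_scale_left)
    also have "\<dots> = (\<Sum>a<k. c a * (\<Sum>b<k. c b * (if a = b then 1 else 0)))"
    proof (intro sum.cong refl)
      fix a assume a: "a \<in> {..<k}"
      have "dotp m (\<alpha> a) p = (\<Sum>b<k. c b * dotp m (\<alpha> a) (\<alpha> b))"
        unfolding p_def dotp_sum_right dotp_scale_right ..
      also have "\<dots> = (\<Sum>b<k. c b * (if a = b then 1 else 0))"
        using assms a unfolding orthon_def by (intro sum.cong) auto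
      finally show "c a * dotp m (\<alpha> a) p = c a * (\<Sum>b<k. c b * (if a = b then 1 else 0))" by simp
    qed
    also have "\<dots> = (\<Sum>a<k. c a * c a)" by (simp add: if_distrib cong: if_cong)
    finally show ?thesis .
  qed
  have "0 \<le> dotp m (\<lambda>i. z i - p i) (\<lambda>i. z i - p i)" by (rule dotp_nonneg)
  also have "dotp m (\<lambda>i. z i - p i) (\<lambda>i. z i - p i) = dotp m z z - 2 * dotp m z p + dotp m p p"
  proof -
    have "dotp m (\<lambda>i. z i - p i) (\<lambda>i. z i - p i) = (\<Sum>i<m. z i * z i - 2 * (z i * p i) + p i * p i)"
      unfolding dotp_def by (intro sum.cong) (auto simp: algebra_simps)
    also have "\<dots> = dotp m z z - 2 * dotp m z p + dotp m p p"
      by (simp add: dotp_def sum.distrib sum_subtractf sum_distrib_left)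
    finally show ?thesis .
  qed
  finally show ?thesis using zp pp by (simp add: c_def power2_eq_square)
qed

lemma gab_le:
  fixes g A B :: real
  assumes "\<bar>g\<bar> \<le> 1"
  shows "g * A * B \<le> (A * A + B * B) / 2"
proof -
  have "0 \<le> (\<bar>A\<bar> - \<bar>B\<bar>)\<^sup>2" by simp
  then have h1: "2 * \<bar>A * B\<bar> \<le> A * A + B * B"
    by (simp add: power2_eq_square algebra_simps abs_mult)
  have "g * A * B \<le> \<bar>g * A * B\<bar>" by simp
  also have "\<dots> = \<bar>g\<bar> * \<bar>A * B\<bar>" by (simp add: abs_mult)
  also have "\<dots> \<le> 1 * \<bar>A * B\<bar>" by (rule mult_right_mono[OF assms]) simp
  finally show ?thesis using h1 by simp
qed

lemma duality_fun:
  assumes ou: "orthon m k2 u" and ov: "orthon n k2 v" and s: "\<forall>b<k2. 0 \<le> s b"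
    and oa: "orthon m k1 \<alpha>" and ob: "orthon n k1 \<beta>" and g: "\<forall>a<k1. \<bar>g a\<bar> \<le> 1"
  shows "(\<Sum>i<m. \<Sum>j<n. (\<Sum>a<k1. \<alpha> a i * g a * \<beta> a j) * (\<Sum>b<k2. u b i * s b * v b j)) \<le> (\<Sum>b<k2. s b)"
proof -
  have "(\<Sum>i<m. \<Sum>j<n. (\<Sum>a<k1. \<alpha> a i * g a * \<beta> a j) * (\<Sum>b<k2. u b i * s b * v b j)) =
    (\<Sum>a<k1. \<Sum>b<k2. g a * s b * dotp m (\<alpha> a) (u b) * dotp n (\<beta> a) (v b))" by (rule bil)
  also have "\<dots> = (\<Sum>b<k2. s b * (\<Sum>a<k1. g a * dotp m (\<alpha> a) (u b) * dotp n (\<beta> a) (v b)))"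
    by (subst sum.swap) (simp add: sum_distrib_left mult_ac)
  also have "\<dots> \<le> (\<Sum>b<k2. s b * 1)"
  proof (rule sum_mono)
    fix b assume b: "b \<in> {..<k2}"
    have "(\<Sum>a<k1. g a * dotp m (\<alpha> a) (u b) * dotp n (\<beta> a) (v b)) \<le>
       (\<Sum>a<k1. ((dotp m (\<alpha> a) (u b))\<^sup>2 + (dotp n (\<beta> a) (v b))\<^sup>2) / 2)"
    proof (rule sum_mono)
      fix a assume a: "a \<in> {..<k1}"
      show "g a * dotp m (\<alpha> a) (u b) * dotp n (\<beta> a) (v b) \<le>
        ((dotp m (\<alpha> a) (u b))\<^sup>2 + (dotp n (\<beta> a) (v b))\<^sup>2) / 2"
        using gab_le[of "g a" "dotp m (\<alpha> a) (u b)" "dotp n (\<beta> a) (v b)"] g a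
        by (simp add: power2_eq_square)
    qed
    also have "\<dots> = ((\<Sum>a<k1. (dotp m (\<alpha> a) (u b))\<^sup>2) + (\<Sum>a<k1. (dotp n (\<beta> a) (v b))\<^sup>2)) / 2"
      by (simp add: sum.distrib[symmetric] sum_divide_distrib[symmetric])
    also have "\<dots> \<le> (dotp m (u b) (u b) + dotp n (v b) (v b)) / 2"
      using bessel[OF oa, of "u b"] bessel[OF ob, of "v b"] by simp
    also have "\<dots> = 1" using ou ov b unfolding orthon_def by simp
    finally show "s b * (\<Sum>a<k1. g a * dotp m (\<alpha> a) (u b) * dotp n (\<beta> a) (v b)) \<le> s b * 1"
      using s b by (intro mult_left_mono) auto
  qed
  finally show ?thesis by simp
qed

lemma selfdual_fun:
  assumes ou: "orthon m k u" and ov: "orthon n k v"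
  shows "(\<Sum>i<m. \<Sum>j<n. (\<Sum>a<k. u a i * x a * v a j) * (\<Sum>b<k. u b i * y b * v b j)) = (\<Sum>a<k. x a * y a)"
proof -
  have "(\<Sum>i<m. \<Sum>j<n. (\<Sum>a<k. u a i * x a * v a j) * (\<Sum>b<k. u b i * y b * v b j)) =
    (\<Sum>a<k. \<Sum>b<k. x a * y b * dotp m (u a) (u b) * dotp n (v a) (v b))" by (rule bil)
  also have "\<dots> = (\<Sum>a<k. \<Sum>b<k. x a * y b * (if a = b then 1 else 0))"
    using ou ov unfolding orthon_def by (intro sum.cong refl) auto
  also have "\<dots> = (\<Sum>a<k. x a * y a)"
    by (simp add: if_distrib cong: if_cong)
  finally show ?thesis .
qed

lemma is_svd_fun:
  assumes svd: "is_svd W P s Q" and W: "W \<in> carrier_mat m n" and k: "k = min m n"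
  shows "orthon m k (\<lambda>a i. P $$ (i,a)) \<and> orthon n k (\<lambda>a j. Q $$ (j,a)) \<and> (\<forall>a<k. 0 \<le> s a) \<and>
    (\<forall>i<m. \<forall>j<n. W $$ (i,j) = (\<Sum>a<k. P $$ (i,a) * s a * Q $$ (j,a)))"
proof -
  have dims: "dim_row W = m" "dim_col W = n" using W by auto
  have P: "P \<in> carrier_mat m k" and Q: "Q \<in> carrier_mat n k"
    and PP: "transpose_mat P * P = 1\<^sub>m k" and QQ: "transpose_mat Q * Q = 1\<^sub>m k"
    and s: "\<forall>a<k. 0 \<le> s a" and eq: "W = P * mat_diag k s * transpose_mat Q"
    using svd unfolding is_svd_def Let_def dims k by auto
  have oP: "orthon m k (\<lambda>a i. P $$ (i,a))"
    unfolding orthon_def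
  proof (intro allI impI)
    fix a b assume ab: "a < k" "b < k"
    have "(transpose_mat P * P) $$ (a,b) = (if a = b then 1 else 0)" using PP ab by simp
    then show "dotp m (\<lambda>i. P $$ (i,a)) (\<lambda>i. P $$ (i,b)) = (if a = b then 1 else 0)"
      using P ab by (simp add: dotp_def scalar_prod_def atLeast0LessThan row_def col_def)
  qed
  have oQ: "orthon n k (\<lambda>a i. Q $$ (i,a))"
    unfolding orthon_def
  proof (intro allI impI)
    fix a b assume ab: "a < k" "b < k"
    have "(transpose_mat Q * Q) $$ (a,b) = (if a = b then 1 else 0)" using QQ ab by simp
    then show "dotp n (\<lambda>i. Q $$ (i,a)) (\<lambda>i. Q $$ (i,b)) = (if a = b then 1 else 0)"
      using Q ab by (simp add: dotp_def scalar_prod_def atLeast0LessThan row_def col_def)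
  qed
  have "\<forall>i<m. \<forall>j<n. W $$ (i,j) = (\<Sum>a<k. P $$ (i,a) * s a * Q $$ (j,a))"
    using entry3[OF P Q] eq by simp
  then show ?thesis using oP oQ s by blast
qed

lemma svd_exists:
  assumes W: "W \<in> carrier_mat m n"
  shows "\<exists>P s Q. is_svd W P s Q"
proof -
  define k where "k = min m n"
  obtain u v s where uv: "orthon m k u" "orthon n k v" "\<forall>a<k. 0 \<le> s a"
     "\<forall>i<m. \<forall>j<n. W $$ (i,j) = (\<Sum>a<k. u a i * s a * v a j)"
    using svd_fun[of k m n "\<lambda>i j. W $$ (i,j)"] k_def by blast
  define P where "P = mat m k (\<lambda>(i,a). u a i)"
  define Q where "Q = mat n k (\<lambda>(j,a). v a j)"
  have P: "P \<in> carrier_mat m k" and Q: "Q \<in> carrier_mat n k" by (auto simp: P_def Q_def)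
  have PP: "transpose_mat P * P = 1\<^sub>m k"
    using uv(1) by (intro eq_matI) (auto simp: P_def orthon_def dotp_def scalar_prod_def atLeast0LessThan row_def col_def)
  have QQ: "transpose_mat Q * Q = 1\<^sub>m k"
    using uv(2) by (intro eq_matI) (auto simp: Q_def orthon_def dotp_def scalar_prod_def atLeast0LessThan row_def col_def)
  have eq: "W = P * mat_diag k s * transpose_mat Q"
  proof (rule eq_matI)
    fix i j assume ij: "i < dim_row (P * mat_diag k s * transpose_mat Q)" "j < dim_col (P * mat_diag k s * transpose_mat Q)"
    then have i: "i < m" and j: "j < n" using P Q by auto
    show "W $$ (i,j) = (P * mat_diag k s * transpose_mat Q) $$ (i,j)"
      unfolding entry3[OF P Q i j] using uv(4) i j by (simp add: P_def Q_def)
  qed (use W P Q in auto)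
  have "is_svd W P s Q"
    unfolding is_svd_def Let_def using W P Q PP QQ uv(3) eq k_def by auto
  then show ?thesis by blast
qed

lemma nuclear_norm_eq:
  assumes svd: "is_svd W P s Q" and W: "W \<in> carrier_mat m n" and k: "k = min m n"
  shows "nuclear_norm W = (\<Sum>a<k. s a)"
proof -
  have dims: "dim_row W = m" "dim_col W = n" using W by auto
  have uniq: "(\<Sum>a<k. s' a) = (\<Sum>a<k. s a)" if svd': "is_svd W P' s' Q'" for P' s' Q'
  proof -
    note A = is_svd_fun[OF svd W k] and B = is_svd_fun[OF svd' W k]
    let ?T = "\<lambda>P Q. (\<Sum>i<m. \<Sum>j<n. (\<Sum>a<k. P $$ (i,a) * 1 * Q $$ (j,a)) * W $$ (i,j))"
    have WA: "?T P' Q' = (\<Sum>i<m. \<Sum>j<n. (\<Sum>a<k. P' $$ (i,a) * 1 * Q' $$ (j,a)) * (\<Sum>b<k. P $$ (i,b) * s b * Q $$ (j,b)))"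
      using A by (intro sum.cong refl) auto
    have WB: "?T P' Q' = (\<Sum>i<m. \<Sum>j<n. (\<Sum>a<k. P' $$ (i,a) * 1 * Q' $$ (j,a)) * (\<Sum>b<k. P' $$ (i,b) * s' b * Q' $$ (j,b)))"
      using B by (intro sum.cong refl) auto
    have WA': "?T P Q = (\<Sum>i<m. \<Sum>j<n. (\<Sum>a<k. P $$ (i,a) * 1 * Q $$ (j,a)) * (\<Sum>b<k. P $$ (i,b) * s b * Q $$ (j,b)))"
      using A by (intro sum.cong refl) auto
    have WB': "?T P Q = (\<Sum>i<m. \<Sum>j<n. (\<Sum>a<k. P $$ (i,a) * 1 * Q $$ (j,a)) * (\<Sum>b<k. P' $$ (i,b) * s' b * Q' $$ (j,b)))"
      using B by (intro sum.cong refl) auto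
    have "(\<Sum>a<k. s' a) \<le> (\<Sum>a<k. s a)"
    proof -
      have "(\<Sum>a<k. s' a) = ?T P' Q'"
        unfolding WB using selfdual_fun[of m k "\<lambda>a i. P' $$ (i,a)" n "\<lambda>a j. Q' $$ (j,a)" "\<lambda>_. 1" s'] B by simp
      also have "\<dots> \<le> (\<Sum>a<k. s a)" unfolding WA
        using duality_fun[of m k "\<lambda>a i. P $$ (i,a)" n "\<lambda>a j. Q $$ (j,a)" s k "\<lambda>a i. P' $$ (i,a)" "\<lambda>a j. Q' $$ (j,a)" "\<lambda>_. 1"] A B by simp
      finally show ?thesis .
    qed
    moreover have "(\<Sum>a<k. s a) \<le> (\<Sum>a<k. s' a)"
    proof -
      have "(\<Sum>a<k. s a) = ?T P Q"
        unfolding WA' using selfdual_fun[of m k "\<lambda>a i. P $$ (i,a)" n "\<lambda>a j. Q $$ (j,a)" "\<lambda>_. 1" s] A by simp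
      also have "\<dots> \<le> (\<Sum>a<k. s' a)" unfolding WB'
        using duality_fun[of m k "\<lambda>a i. P' $$ (i,a)" n "\<lambda>a j. Q' $$ (j,a)" s' k "\<lambda>a i. P $$ (i,a)" "\<lambda>a j. Q $$ (j,a)" "\<lambda>_. 1"] A B by simp
      finally show ?thesis .
    qed
    ultimately show ?thesis by simp
  qed
  show ?thesis
    unfolding nuclear_norm_def dims k[symmetric]
  proof (rule the_equality)
    show "\<exists>P' s' Q'. is_svd W P' s' Q' \<and> (\<Sum>a<k. s a) = (\<Sum>i<k. s' i)" using svd by blast
  next
    fix t assume "\<exists>P' s' Q'. is_svd W P' s' Q' \<and> t = (\<Sum>i<k. s' i)"
    then show "t = (\<Sum>a<k. s a)" using uniq by blast
  qed
qed

lemma nuclear_lower: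
  assumes W: "W \<in> carrier_mat m n" and k: "k = min m n"
    and oa: "orthon m k \<alpha>" and ob: "orthon n k \<beta>" and g: "\<forall>a<k. \<bar>g a\<bar> \<le> 1"
  shows "(\<Sum>i<m. \<Sum>j<n. (\<Sum>a<k. \<alpha> a i * g a * \<beta> a j) * W $$ (i,j)) \<le> nuclear_norm W"
proof -
  obtain P s Q where svd: "is_svd W P s Q" using svd_exists[OF W] by blast
  note A = is_svd_fun[OF svd W k]
  have "(\<Sum>i<m. \<Sum>j<n. (\<Sum>a<k. \<alpha> a i * g a * \<beta> a j) * W $$ (i,j)) =
     (\<Sum>i<m. \<Sum>j<n. (\<Sum>a<k. \<alpha> a i * g a * \<beta> a j) * (\<Sum>b<k. P $$ (i,b) * s b * Q $$ (j,b)))"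
    using A by (intro sum.cong refl) auto
  also have "\<dots> \<le> (\<Sum>b<k. s b)"
    using duality_fun[of m k "\<lambda>a i. P $$ (i,a)" n "\<lambda>a j. Q $$ (j,a)" s k \<alpha> \<beta> g] A oa ob g by simp
  also have "\<dots> = nuclear_norm W" using nuclear_norm_eq[OF svd W k] by simp
  finally show ?thesis .
qed



lemma fixpoint_exists:
  fixes \<sigma> :: "nat \<Rightarrow> real"
  assumes k: "0 < k" and \<sigma>: "\<forall>i<k. 0 \<le> \<sigma> i"
  shows "\<exists>l\<ge>0. (\<Sum>j<k. max 0 (2 * \<sigma> j - l)) = real k * l"
proof -
  define f where "f t = (\<Sum>j<k. max 0 (2 * \<sigma> j - t)) - real k * t" for t
  define T where "T = (\<Sum>j<k. 2 * \<sigma> j)"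
  have T0: "0 \<le> T" unfolding T_def using \<sigma> by (intro sum_nonneg) auto
  have f0: "0 \<le> f 0" unfolding f_def by (simp add: sum_nonneg)
  have le: "2 * \<sigma> j \<le> T" if "j < k" for j
    unfolding T_def using \<sigma> that by (intro member_le_sum[of j "{..<k}" "\<lambda>j. 2 * \<sigma> j", simplified]) auto
  have "(\<Sum>j<k. max 0 (2 * \<sigma> j - T)) = 0"
    using le by (intro sum.neutral) auto
  then have fT: "f T \<le> 0" unfolding f_def using T0 by simp
  have "continuous_on {0..T} f" unfolding f_def by (intro continuous_intros)
  then obtain l where l: "0 \<le> l" "l \<le> T" "f l = 0" using IVT2'[of f T 0 0] fT f0 T0 by blast
  then show ?thesis unfolding f_def by auto
qed

lemma fixpoint_unique:
  fixes \<sigma> :: "nat \<Rightarrow> real"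
  assumes k: "0 < k"
    and l1: "(\<Sum>j<k. max 0 (2 * \<sigma> j - l1)) = real k * l1"
    and l2: "(\<Sum>j<k. max 0 (2 * \<sigma> j - l2)) = real k * l2"
  shows "l1 = l2"
proof -
  have *: False if "a < b" "(\<Sum>j<k. max 0 (2 * \<sigma> j - a)) = real k * a"
     "(\<Sum>j<k. max 0 (2 * \<sigma> j - b)) = real k * b" for a b
  proof -
    have "(\<Sum>j<k. max 0 (2 * \<sigma> j - b)) \<le> (\<Sum>j<k. max 0 (2 * \<sigma> j - a))"
      using that(1) by (intro sum_mono) auto
    then have "real k * b \<le> real k * a" using that by simp
    then show False using that(1) k by simp
  qed
  show ?thesis using *[OF _ l1 l2] *[OF _ l2 l1] by fastforce
qed

lemma frob_sq:
  assumes A: "A \<in> carrier_mat m n" and B: "B \<in> carrier_mat m n"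
  shows "(frob_norm (A - 2 \<cdot>\<^sub>m B))\<^sup>2 = (\<Sum>i<m. \<Sum>j<n. (A $$ (i,j) - 2 * B $$ (i,j))\<^sup>2)"
proof -
  have d: "dim_row (A - 2 \<cdot>\<^sub>m B) = m" "dim_col (A - 2 \<cdot>\<^sub>m B) = n" using B by auto
  have "(frob_norm (A - 2 \<cdot>\<^sub>m B))\<^sup>2 = (\<Sum>i<m. \<Sum>j<n. ((A - 2 \<cdot>\<^sub>m B) $$ (i,j))\<^sup>2)"
    unfolding frob_norm_def d by (simp add: sum_nonneg)
  also have "\<dots> = (\<Sum>i<m. \<Sum>j<n. (A $$ (i,j) - 2 * B $$ (i,j))\<^sup>2)"
    using B by (intro sum.cong refl) auto
  finally show ?thesis .
qed



theorem lemmaB6: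
  fixes Mstar P Q :: "real mat" and \<sigma> :: "nat \<Rightarrow> real" and m n k :: nat
    and \<Phi> :: "real mat \<Rightarrow> real"
  assumes "0 < m" and "0 < n"
    and "Mstar \<in> carrier_mat m n"
    and "k = min m n"
    and "P \<in> carrier_mat m k" and "Q \<in> carrier_mat n k"
    and "transpose_mat P * P = 1\<^sub>m k" and "transpose_mat Q * Q = 1\<^sub>m k"
    and "\<forall>i<k. 0 \<le> \<sigma> i"
    and "Mstar = P * mat_diag k \<sigma> * transpose_mat Q"
    and "\<And>W. \<Phi> W = (1/4) * (frob_norm (W - 2 \<cdot>\<^sub>m Mstar))\<^sup>2
                     + (1 / (4 * real k)) * (nuclear_norm W)\<^sup>2"
  shows "(\<exists>!Wstar. Wstar \<in> carrier_mat m n \<and> (\<forall>W\<in>carrier_mat m n. \<Phi> Wstar \<le> \<Phi> W))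
    \<and> (\<exists>w :: nat \<Rightarrow> real.
          (\<forall>i<k. 0 \<le> w i \<and> w i = max 0 (2 * \<sigma> i - (\<Sum>j<k. w j) / real k))
        \<and> (\<forall>W\<in>carrier_mat m n.
              \<Phi> (P * mat_diag k w * transpose_mat Q) \<le> \<Phi> W)
        \<and> (\<forall>w' :: nat \<Rightarrow> real.
              (\<forall>i<k. 0 \<le> w' i \<and> w' i = max 0 (2 * \<sigma> i - (\<Sum>j<k. w' j) / real k))
              \<longrightarrow> (\<forall>i<k. w' i = w i)))"
proof -
  note m0 = assms(1) and n0 = assms(2) and M = assms(3) and kdef = assms(4) and P = assms(5)
    and Q = assms(6) and PP = assms(7) and QQ = assms(8) and \<sigma> = assms(9) and Mdef = assms(10)
    and Phi = assms(11)
  have k0: "0 < k" using m0 n0 kdef by simp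
  define K where "K = real k"
  have K0: "0 < K" using k0 by (simp add: K_def)
  obtain lam where lam0: "0 \<le> lam" and lam: "(\<Sum>j<k. max 0 (2 * \<sigma> j - lam)) = real k * lam"
    using fixpoint_exists[OF k0 \<sigma>] by blast
  define w where "w j = max 0 (2 * \<sigma> j - lam)" for j
  have sumw: "(\<Sum>j<k. w j) = K * lam" using lam by (simp add: w_def K_def)
  have lamw: "(\<Sum>j<k. w j) / real k = lam" using sumw K0 by (simp add: K_def)
  have wprop: "\<forall>i<k. 0 \<le> w i \<and> w i = max 0 (2 * \<sigma> i - (\<Sum>j<k. w j) / real k)"
    unfolding lamw by (simp add: w_def)
  have wuniq: "\<forall>w'. (\<forall>i<k. 0 \<le> w' i \<and> w' i = max 0 (2 * \<sigma> i - (\<Sum>j<k. w' j) / real k))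
              \<longrightarrow> (\<forall>i<k. w' i = w i)"
  proof (intro allI impI)
    fix w' i assume h: "\<forall>i<k. 0 \<le> w' i \<and> w' i = max 0 (2 * \<sigma> i - (\<Sum>j<k. w' j) / real k)"
      and i: "i < k"
    define l' where "l' = (\<Sum>j<k. w' j) / real k"
    have h': "\<forall>i<k. w' i = max 0 (2 * \<sigma> i - l')" using h unfolding l'_def[symmetric] by blast
    have "(\<Sum>j<k. max 0 (2 * \<sigma> j - l')) = (\<Sum>j<k. w' j)"
      using h' by (intro sum.cong) auto
    also have "\<dots> = real k * l'" unfolding l'_def using k0 by simp
    finally have "l' = lam" using fixpoint_unique[OF k0 _ lam] by blast
    then show "w' i = w i" using h' i unfolding w_def by simp
  qed
  have svdM: "is_svd Mstar P \<sigma> Q"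
  proof -
    have dM: "dim_row Mstar = m" "dim_col Mstar = n" using M by auto
    show ?thesis unfolding is_svd_def Let_def dM kdef[symmetric]
      using P Q PP QQ \<sigma> Mdef by simp
  qed
  note MA = is_svd_fun[OF svdM M kdef]
  have oP: "orthon m k (\<lambda>a i. P $$ (i,a))" and oQ: "orthon n k (\<lambda>a j. Q $$ (j,a))"
    and Ment: "\<And>i j. i < m \<Longrightarrow> j < n \<Longrightarrow> Mstar $$ (i,j) = (\<Sum>a<k. P $$ (i,a) * \<sigma> a * Q $$ (j,a))"
    using MA by auto
  define Ws where "Ws = P * mat_diag k w * transpose_mat Q"
  have Ws: "Ws \<in> carrier_mat m n" unfolding Ws_def using P Q by auto
  have svdW: "is_svd Ws P w Q"
  proof -
    have wnn: "\<forall>i<k. 0 \<le> w i" by (simp add: w_def)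
    have dW: "dim_row Ws = m" "dim_col Ws = n" using Ws by auto
    show ?thesis unfolding is_svd_def Let_def dW kdef[symmetric]
      using P Q PP QQ wnn by (simp add: Ws_def)
  qed
  have NWs: "nuclear_norm Ws = K * lam"
    using nuclear_norm_eq[OF svdW Ws kdef] sumw by simp
  have Went: "Ws $$ (i,j) = (\<Sum>a<k. P $$ (i,a) * w a * Q $$ (j,a))" if "i < m" "j < n" for i j
    unfolding Ws_def by (rule entry3[OF P Q that])
  define g where "g a = (if lam = 0 then 0 else (2 * \<sigma> a - w a) / lam)" for a
  have gw: "2 * \<sigma> a - w a = lam * g a" if "a < k" for a
  proof (cases "lam = 0")
    case True
    then show ?thesis using \<sigma> that lam0 by (simp add: g_def w_def)
  qed (simp add: g_def)
  have g01: "0 \<le> g a \<and> g a \<le> 1" if "a < k" for a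
  proof (cases "lam = 0")
    case True
    then show ?thesis by (simp add: g_def)
  next
    case False
    then have lp: "0 < lam" using lam0 by simp
    have "0 \<le> 2 * \<sigma> a - w a" "2 * \<sigma> a - w a \<le> lam" using \<sigma> that lam0 by (auto simp: w_def)
    then show ?thesis using lp False by (simp add: g_def field_simps)
  qed
  have gabs: "\<forall>a<k. \<bar>g a\<bar> \<le> 1" using g01 by auto
  have sgw: "(\<Sum>a<k. g a * w a) = K * lam"
  proof (cases "lam = 0")
    case True
    then show ?thesis by (simp add: g_def)
  next
    case False
    have gw1: "g a * w a = w a" if "a < k" for a
    proof (cases "w a = 0")
      case False
      then have "w a = 2 * \<sigma> a - lam" by (auto simp: w_def max_def split: if_splits)
      then have "g a = 1" using \<open>lam \<noteq> 0\<close> by (simp add: g_def)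
      then show ?thesis by simp
    qed simp
    have "(\<Sum>a<k. g a * w a) = (\<Sum>a<k. w a)"
      by (intro sum.cong refl) (rule gw1, simp)
    then show ?thesis using sumw by simp
  qed
  define G where "G i j = (\<Sum>a<k. P $$ (i,a) * g a * Q $$ (j,a))" for i j
  have key: "2 * Mstar $$ (i,j) - Ws $$ (i,j) = lam * G i j" if ij: "i < m" "j < n" for i j
  proof -
    have "2 * Mstar $$ (i,j) - Ws $$ (i,j) = (\<Sum>a<k. P $$ (i,a) * (2 * \<sigma> a - w a) * Q $$ (j,a))"
      unfolding Ment[OF ij] Went[OF ij] by (simp add: sum_distrib_left sum_subtractf[symmetric] algebra_simps)
    also have "\<dots> = (\<Sum>a<k. P $$ (i,a) * (lam * g a) * Q $$ (j,a))"
      using gw by (intro sum.cong) auto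
    also have "\<dots> = lam * G i j" unfolding G_def by (simp add: sum_distrib_left mult_ac)
    finally show ?thesis .
  qed
  define SG where "SG = (\<Sum>i<m. \<Sum>j<n. (G i j)\<^sup>2)"
  have SWsG: "(\<Sum>i<m. \<Sum>j<n. G i j * Ws $$ (i,j)) = K * lam"
  proof -
    have "(\<Sum>i<m. \<Sum>j<n. G i j * Ws $$ (i,j)) =
       (\<Sum>i<m. \<Sum>j<n. (\<Sum>a<k. P $$ (i,a) * g a * Q $$ (j,a)) * (\<Sum>b<k. P $$ (i,b) * w b * Q $$ (j,b)))"
      unfolding G_def using Went by (intro sum.cong refl) auto
    also have "\<dots> = (\<Sum>a<k. g a * w a)"
      by (rule selfdual_fun[OF oP oQ])
    finally show ?thesis using sgw by simp
  qed
  have PhiWs: "\<Phi> Ws = 1/4 * (lam\<^sup>2 * SG) + 1 / (4 * K) * (K * lam)\<^sup>2"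
  proof -
    have "(frob_norm (Ws - 2 \<cdot>\<^sub>m Mstar))\<^sup>2 = (\<Sum>i<m. \<Sum>j<n. (Ws $$ (i,j) - 2 * Mstar $$ (i,j))\<^sup>2)"
      by (rule frob_sq[OF Ws M])
    also have "\<dots> = (\<Sum>i<m. \<Sum>j<n. lam\<^sup>2 * (G i j)\<^sup>2)"
    proof (intro sum.cong refl)
      fix i j assume "i \<in> {..<m}" "j \<in> {..<n}"
      then have "Ws $$ (i,j) - 2 * Mstar $$ (i,j) = - (lam * G i j)" using key by force
      then show "(Ws $$ (i,j) - 2 * Mstar $$ (i,j))\<^sup>2 = lam\<^sup>2 * (G i j)\<^sup>2"
        by (simp add: power_mult_distrib)
    qed
    also have "\<dots> = lam\<^sup>2 * SG" unfolding SG_def by (simp add: sum_distrib_left)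
    finally show ?thesis using Phi[of Ws] NWs K_def by simp
  qed
  have main: "\<Phi> Ws + 1/4 * (\<Sum>i<m. \<Sum>j<n. (W $$ (i,j) - Ws $$ (i,j))\<^sup>2) \<le> \<Phi> W"
    if W: "W \<in> carrier_mat m n" for W
  proof -
    define SD where "SD = (\<Sum>i<m. \<Sum>j<n. (W $$ (i,j) - Ws $$ (i,j))\<^sup>2)"
    define T where "T = (\<Sum>i<m. \<Sum>j<n. G i j * W $$ (i,j))"
    define N where "N = nuclear_norm W"
    have TN: "T \<le> N"
      unfolding T_def N_def G_def using nuclear_lower[OF W kdef oP oQ gabs] by simp
    have "(frob_norm (W - 2 \<cdot>\<^sub>m Mstar))\<^sup>2 = (\<Sum>i<m. \<Sum>j<n. (W $$ (i,j) - 2 * Mstar $$ (i,j))\<^sup>2)"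
      by (rule frob_sq[OF W M])
    also have "\<dots> = (\<Sum>i<m. \<Sum>j<n. (W $$ (i,j) - Ws $$ (i,j))\<^sup>2
         - 2 * lam * (G i j * W $$ (i,j)) + 2 * lam * (G i j * Ws $$ (i,j)) + lam\<^sup>2 * (G i j)\<^sup>2)"
    proof (intro sum.cong refl)
      fix i j assume "i \<in> {..<m}" "j \<in> {..<n}"
      then have "2 * Mstar $$ (i,j) = Ws $$ (i,j) + lam * G i j" using key by force
      then show "(W $$ (i,j) - 2 * Mstar $$ (i,j))\<^sup>2 = (W $$ (i,j) - Ws $$ (i,j))\<^sup>2
         - 2 * lam * (G i j * W $$ (i,j)) + 2 * lam * (G i j * Ws $$ (i,j)) + lam\<^sup>2 * (G i j)\<^sup>2"
        by (simp add: power2_eq_square algebra_simps)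
    qed
    also have "\<dots> = SD - 2 * lam * T + 2 * lam * (K * lam) + lam\<^sup>2 * SG"
      unfolding SD_def T_def SG_def SWsG[symmetric]
      by (simp add: sum.distrib sum_subtractf sum_distrib_left)
    finally have fr: "(frob_norm (W - 2 \<cdot>\<^sub>m Mstar))\<^sup>2 = SD - 2 * lam * T + 2 * lam * (K * lam) + lam\<^sup>2 * SG" .
    have PhiW: "\<Phi> W = 1/4 * (SD - 2 * lam * T + 2 * lam * (K * lam) + lam\<^sup>2 * SG) + 1 / (4 * K) * N\<^sup>2"
      using Phi[of W] fr by (simp add: N_def K_def)
    have e: "\<Phi> W - (\<Phi> Ws + 1/4 * SD) = ((N - K * lam)\<^sup>2 + 2 * (K * lam * (N - T))) / (4 * K)"
      unfolding PhiW PhiWs using K0 by (simp add: field_simps power2_eq_square)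
    have "0 \<le> K * lam * (N - T)" using K0 lam0 TN by simp
    then have "0 \<le> ((N - K * lam)\<^sup>2 + 2 * (K * lam * (N - T))) / (4 * K)" using K0 by simp
    then show ?thesis using e unfolding SD_def by linarith
  qed
  have SDnn: "0 \<le> (\<Sum>i<m. \<Sum>j<n. (W $$ (i,j) - Ws $$ (i,j))\<^sup>2)" for W
    by (intro sum_nonneg) auto
  have minW: "\<forall>W\<in>carrier_mat m n. \<Phi> Ws \<le> \<Phi> W"
    using main SDnn by (meson add_increasing2 le_add_same_cancel1 mult_nonneg_nonneg order_trans zero_le_divide_1_iff zero_le_numeral)
  have uniqW: "W' = Ws" if W': "W' \<in> carrier_mat m n" and mn: "\<forall>W\<in>carrier_mat m n. \<Phi> W' \<le> \<Phi> W" for W'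
  proof -
    have "\<Phi> W' \<le> \<Phi> Ws" using mn Ws by blast
    then have "(\<Sum>i<m. \<Sum>j<n. (W' $$ (i,j) - Ws $$ (i,j))\<^sup>2) \<le> 0" using main[OF W'] by simp
    then have z: "(\<Sum>i<m. \<Sum>j<n. (W' $$ (i,j) - Ws $$ (i,j))\<^sup>2) = 0" using SDnn[of W'] by simp
    have "W' $$ (i,j) = Ws $$ (i,j)" if "i < m" "j < n" for i j
    proof -
      have "(\<Sum>j<n. (W' $$ (i,j) - Ws $$ (i,j))\<^sup>2) = 0"
        using z that by (subst (asm) sum_nonneg_eq_0_iff) (auto intro: sum_nonneg)
      then have "(W' $$ (i,j) - Ws $$ (i,j))\<^sup>2 = 0"
        using that by (subst (asm) sum_nonneg_eq_0_iff) auto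
      then show ?thesis by simp
    qed
    then show ?thesis using W' Ws by (intro eq_matI) auto
  qed
  have part1: "\<exists>!Wstar. Wstar \<in> carrier_mat m n \<and> (\<forall>W\<in>carrier_mat m n. \<Phi> Wstar \<le> \<Phi> W)"
    using Ws minW uniqW by blast
  have part2: "\<forall>W\<in>carrier_mat m n. \<Phi> (P * mat_diag k w * transpose_mat Q) \<le> \<Phi> W"
    using minW unfolding Ws_def .
  show ?thesis using part1 part2 wprop wuniq by blast
qed

end
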